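(* Let $a\in\mathbb{R}$, $\beta,\eta,\nu>0$ with $\eta^2<2\beta\nu$, $\mu=\eta/\nu$, $\sigma=2\beta/\nu$, and $p\in[1-\beta,1]$. Consider the quantile problem $$\sup_{q\ge a,\,f}\ q\quad\text{s.t.}\quad (1-\beta)+\int_a^q f(x)dx=p,\ \int_a^\infty f(x)dx=\beta,\ f(a)=f(a+)=\eta,\ f'_+(a)\ge-\nu,\ f\text{ convex on }[a,\infty),\ f\ge0\text{ on }[a,\infty).$$ Let $z^*(a,b)$ be the optimal value of the problem $\sup_f\int_b^\infty f(x)dx$ subject to the last five constraints above, and define $q^*=\inf\{b\ge a: z^*(a,b)=1-p\}$ (with $\inf\emptyset=\infty$). Then $q^*$ equals the optimal value of the quantile problem, and $$q^*=\begin{cases}a+\mu-\sqrt{\mu^2-\sigma+\frac{2(1-p)}{\nu}}&\text{if }1-\beta\le p\le1-\beta+\frac{\eta^2}{2\nu},\\ \infty&\text{if }p>1-\beta+\frac{\eta^2}{2\nu}.\end{cases}$$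
   Context: $f(a+)$ denotes the right limit of $f$ at $a$ and $f'_+$ the right derivative. The first constraint encodes that the distribution function equals $1-\beta$ at $a$ and equals $p$ at $q$, i.e. $q$ is the $p$-quantile. *)

theory Defs
  imports "HOL-Analysis.Analysis"
begin

definition feasible :: "real \<Rightarrow> real \<Rightarrow> real \<Rightarrow> real \<Rightarrow> (real \<Rightarrow> real) \<Rightarrow> bool" where
  "feasible a \<beta> \<eta> \<nu> f \<longleftrightarrow>
     (f has_integral \<beta>) {a..} \<and>
     f a = \<eta> \<and> (f \<longlongrightarrow> \<eta>) (at_right a) \<and>
     (\<exists>D. (f has_real_derivative D) (at a within {a..}) \<and> D \<ge> - \<nu>) \<and>
     convex_on {a..} f \<and>
     (\<forall>x\<ge>a. f x \<ge> 0)"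

definition zstar :: "real \<Rightarrow> real \<Rightarrow> real \<Rightarrow> real \<Rightarrow> real \<Rightarrow> ereal" where
  "zstar a \<beta> \<eta> \<nu> b = Sup {ereal (integral {b..} f) | f. feasible a \<beta> \<eta> \<nu> f}"

definition qstar :: "real \<Rightarrow> real \<Rightarrow> real \<Rightarrow> real \<Rightarrow> real \<Rightarrow> ereal" where
  "qstar a \<beta> \<eta> \<nu> p = Inf {ereal b | b. b \<ge> a \<and> zstar a \<beta> \<eta> \<nu> b = ereal (1 - p)}"

definition quantile_value :: "real \<Rightarrow> real \<Rightarrow> real \<Rightarrow> real \<Rightarrow> real \<Rightarrow> ereal" where
  "quantile_value a \<beta> \<eta> \<nu> p = Sup {ereal q | q f. q \<ge> a \<and> feasible a \<beta> \<eta> \<nu> f \<and>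
       (1 - \<beta>) + integral {a..q} f = p}"

end

theory Submission
  imports Defs
begin

lemma lin_int:
  fixes u v A B :: real
  assumes "u \<le> v"
  shows "((\<lambda>x. A - B * (x - u)) has_integral (A * (v - u) - B * (v - u)^2 / 2)) {u..v}"
proof -
  have "((\<lambda>x. A - B * (x - u)) has_integral
          ((\<lambda>x. A * (x - u) - B * (x - u)^2 / 2) v - (\<lambda>x. A * (x - u) - B * (x - u)^2 / 2) u)) {u..v}"
    apply (rule fundamental_theorem_of_calculus[OF assms])
    unfolding has_real_derivative_iff_has_vector_derivative[symmetric]
    by (auto intro!: derivative_eq_intros simp: field_simps power2_eq_square)
  then show ?thesis by simp
qed


lemma max3_convex:
  fixes A B C D :: real
  shows "convex_on UNIV (\<lambda>x. max 0 (max (A - B * x) (C - D * x)))"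
proof (rule convex_onI)
  fix t x y :: real
  assume t: "t > 0" "t < 1"
  define M where "M = (\<lambda>x::real. max 0 (max (A - B * x) (C - D * x)))"
  have M1: "A - B * z \<le> M z" and M2: "C - D * z \<le> M z" and M0: "0 \<le> M z" for z
    unfolding M_def by auto
  have t0: "1 - t \<ge> 0" "t \<ge> 0" using t by auto
  have e1: "A - B * ((1 - t) * x + t * y) = (1 - t) * (A - B * x) + t * (A - B * y)"
    by (simp add: algebra_simps)
  have e2: "C - D * ((1 - t) * x + t * y) = (1 - t) * (C - D * x) + t * (C - D * y)"
    by (simp add: algebra_simps)
  have "(1 - t) * (A - B * x) + t * (A - B * y) \<le> (1 - t) * M x + t * M y"
    by (intro add_mono mult_left_mono M1 t0)
  moreover have "(1 - t) * (C - D * x) + t * (C - D * y) \<le> (1 - t) * M x + t * M y"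
    by (intro add_mono mult_left_mono M2 t0)
  moreover have "0 \<le> (1 - t) * M x + t * M y"
    by (intro add_nonneg_nonneg mult_nonneg_nonneg M0 t0)
  moreover have Mu: "M u = max 0 (max (A - B * u) (C - D * u))" for u unfolding M_def by simp
  ultimately have "M ((1 - t) * x + t * y) \<le> (1 - t) * M x + t * M y"
    by (simp only: Mu[of "(1 - t) * x + t * y"] e1 e2) simp
  then show "max 0 (max (A - B * ((1 - t) *\<^sub>R x + t *\<^sub>R y)) (C - D * ((1 - t) *\<^sub>R x + t *\<^sub>R y)))
         \<le> (1 - t) * max 0 (max (A - B * x) (C - D * x)) + t * max 0 (max (A - B * y) (C - D * y))"
    unfolding M_def by simp
qed simp

context
  fixes a \<beta> \<eta> \<nu> :: real and f :: "real \<Rightarrow> real"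
  assumes feas: "feasible a \<beta> \<eta> \<nu> f" and nu: "\<nu> > 0"
begin

lemma F_nonneg: "x \<ge> a \<Longrightarrow> f x \<ge> 0"
  using feas by (auto simp: feasible_def)

lemma F_int: "f integrable_on {a..b}"
proof -
  have "f integrable_on {a..}" using feas by (auto simp: feasible_def)
  show ?thesis
  proof (cases "a \<le> b")
    case True
    then show ?thesis using integrable_on_subinterval[OF \<open>f integrable_on {a..}\<close>, of a b] by auto
  next
    case False
    then show ?thesis by (simp add: integrable_on_empty)
  qed
qed

lemma F_tail:
  assumes "a \<le> b"
  shows "(f has_integral (\<beta> - integral {a..b} f)) {b..}"
proof -
  have S: "(f has_integral \<beta>) {a..}" using feas by (auto simp: feasible_def)
  have T0: "(f has_integral integral {a..b} f) {a..b}" using F_int by (simp add: integrable_integral)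
  have T: "(f has_integral integral {a..b} f) {a..<b}"
    apply (rule has_integral_spike_set_eq[THEN iffD1, OF _ _ T0])
    by (rule negligible_subset[of "{b}"]; auto) (rule negligible_subset[of "{}"]; auto)
  have "(f has_integral (\<beta> - integral {a..b} f)) ({a..} - {a..<b})"
    by (rule has_integral_setdiff[OF S T]) (rule negligible_setdiff, auto)
  moreover have "{a..} - {a..<b} = {b..}" using assms by auto
  ultimately show ?thesis by simp
qed

lemma F_tail_eq: "a \<le> b \<Longrightarrow> integral {b..} f = \<beta> - integral {a..b} f"
  using F_tail by (rule integral_unique)

lemma F_le_beta: "a \<le> b \<Longrightarrow> integral {a..b} f \<le> \<beta>"
proof -
  assume ab: "a \<le> b"
  have "0 \<le> \<beta> - integral {a..b} f"
    by (rule has_integral_nonneg[OF F_tail[OF ab]]) (use ab F_nonneg in auto)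
  then show ?thesis by simp
qed

lemma F_tangent:
  assumes "x \<ge> a"
  shows "f x \<ge> \<eta> - \<nu> * (x - a)"
proof (cases "x = a")
  case True then show ?thesis using feas by (auto simp: feasible_def)
next
  case False
  with assms have xa: "x > a" by auto
  obtain D where D: "(f has_real_derivative D) (at a within {a..})" "D \<ge> - \<nu>"
    using feas by (auto simp: feasible_def)
  have fa: "f a = \<eta>" using feas by (auto simp: feasible_def)
  have cv: "convex_on {a..} f" using feas by (auto simp: feasible_def)
  have "((\<lambda>y. (f y - f a) / (y - a)) \<longlongrightarrow> D) (at a within {a..})"
    using D(1) by (simp add: has_field_derivative_iff)
  then have lim: "((\<lambda>y. (f y - f a) / (y - a)) \<longlongrightarrow> D) (at_right a)"
    by (rule tendsto_mono[rotated]) (auto intro: at_le)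
  have ev: "eventually (\<lambda>y. (f y - f a) / (y - a) \<le> (f x - f a) / (x - a)) (at_right a)"
    using eventually_at_right_real[OF xa]
  proof eventually_elim
    fix y assume y: "y \<in> {a<..<x}"
    have cvx: "convex_on {a..x} f" by (rule convex_on_subset[OF cv]) auto
    have "f y \<le> (f x - f a) / (x - a) * (y - a) + f a"
      using convex_onD_Icc'[OF cvx, of y] y by auto
    then have "f y - f a \<le> (f x - f a) / (x - a) * (y - a)" by simp
    then show "(f y - f a) / (y - a) \<le> (f x - f a) / (x - a)"
      using y by (simp add: divide_le_eq)
  qed
  have "D \<le> (f x - f a) / (x - a)"
    by (rule tendsto_upperbound[OF lim ev]) simp
  then have "D * (x - a) \<le> f x - f a" using xa by (simp add: le_divide_eq)
  moreover have "- \<nu> * (x - a) \<le> D * (x - a)" using D(2) xa by (intro mult_right_mono) auto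
  ultimately show ?thesis using fa by simp
qed

lemma F_mono:
  assumes "a \<le> x" "x \<le> y"
  shows "f y \<le> f x"
proof (rule ccontr)
  assume "\<not> f y \<le> f x"
  then have lt: "f x < f y" by simp
  have xy: "x < y"
  proof -
    have "x \<noteq> y" using lt by auto
    then show ?thesis using assms(2) by simp
  qed
  have fx0: "f x \<ge> 0" using F_nonneg assms by auto
  have fy0: "f y > 0" using fx0 lt by linarith
  have cv: "convex_on {a..} f" using feas by (auto simp: feasible_def)
  have grow: "f z \<ge> f y" if z: "z \<ge> y" for z
  proof -
    have cvx: "convex_on {x..z} f" by (rule convex_on_subset[OF cv]) (use assms in auto)
    have yin: "y \<in> {x..z}" using xy z by simp
    have "f y \<le> (f z - f x) / (z - x) * (y - x) + f x"
      using convex_onD_Icc'[OF cvx yin] by simp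
    then have h: "f y - f x \<le> (f z - f x) / (z - x) * (y - x)" by simp
    have zx: "z - x > 0" using z xy by auto
    have qpos: "(f z - f x) / (z - x) > 0"
    proof (rule ccontr)
      assume "\<not> ?thesis"
      then have "(f z - f x) / (z - x) * (y - x) \<le> 0" using xy by (intro mult_nonpos_nonneg) auto
      then show False using h lt by linarith
    qed
    have "(f z - f x) / (z - x) * (y - x) \<le> (f z - f x) / (z - x) * (z - x)"
      using qpos z by (intro mult_left_mono) auto
    also have "\<dots> = f z - f x" using zx by simp
    finally show ?thesis using h by linarith
  qed
  define Z where "Z = y + (\<bar>\<beta>\<bar> + 1) / f y"
  have yZ: "y \<le> Z" using fy0 unfolding Z_def by (simp add: add_pos_pos)
  have I2: "f integrable_on {y..Z}"
    by (rule integrable_on_subinterval[OF F_int[of Z]]) (use assms in auto)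
  have "integral {y..Z} (\<lambda>_. f y) \<le> integral {y..Z} f"
    by (rule integral_le[OF integrable_const_ivl I2]) (simp add: grow)
  moreover have "integral {y..Z} (\<lambda>_. f y) = \<bar>\<beta>\<bar> + 1"
  proof -
    have "integral {y..Z} (\<lambda>_. f y) = (Z - y) * f y" using yZ by simp
    also have "\<dots> = \<bar>\<beta>\<bar> + 1" unfolding Z_def using fy0 by simp
    finally show ?thesis .
  qed
  moreover have "integral {a..Z} f = integral {a..y} f + integral {y..Z} f"
    using Henstock_Kurzweil_Integration.integral_combine[OF order_trans[OF assms] yZ F_int[of Z]] by simp
  moreover have "integral {a..y} f \<ge> 0"
    by (rule integral_nonneg[OF F_int]) (use F_nonneg assms in auto)
  moreover have "integral {a..Z} f \<le> \<beta>" by (rule F_le_beta[OF order_trans[OF order_trans[OF assms] yZ]])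
  ultimately show False by linarith
qed

lemma F_lower:
  assumes "a \<le> b" "\<eta> \<ge> 0"
  shows "integral {a..b} f \<ge> \<eta> * min (b - a) (\<eta> / \<nu>) - \<nu> * (min (b - a) (\<eta> / \<nu>))^2 / 2"
proof -
  define m where "m = min (b - a) (\<eta> / \<nu>)"
  have m0: "m \<ge> 0" using assms nu unfolding m_def by auto
  have mb: "a + m \<le> b" unfolding m_def by auto
  have L: "((\<lambda>x. \<eta> - \<nu> * (x - a)) has_integral (\<eta> * m - \<nu> * m^2 / 2)) {a..a+m}"
    using lin_int[of a "a+m" \<eta> \<nu>] m0 by simp
  have "\<eta> * m - \<nu> * m^2 / 2 = integral {a..a+m} (\<lambda>x. \<eta> - \<nu> * (x - a))"
    using L by (simp add: integral_unique)
  also have "\<dots> \<le> integral {a..a+m} f"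
    by (rule integral_le[OF has_integral_integrable[OF L] F_int]) (simp add: F_tangent)
  also have "\<dots> \<le> integral {a..b} f"
  proof -
    have "integral {a..b} f = integral {a..a+m} f + integral {a+m..b} f"
    proof -
      have am: "a \<le> a + m" using m0 by simp
      show ?thesis using Henstock_Kurzweil_Integration.integral_combine[OF am mb F_int[of b]] by simp
    qed
    moreover have "integral {a+m..b} f \<ge> 0"
    proof (rule integral_nonneg)
      show "f integrable_on {a+m..b}"
        by (rule integrable_on_subinterval[OF F_int[of b]]) (use m0 in auto)
    qed (use m0 F_nonneg in auto)
    ultimately show ?thesis by simp
  qed
  finally show ?thesis unfolding m_def .
qed

lemma F_boundary:
  assumes "q > a + \<eta> / \<nu>" "\<eta> > 0" "\<eta>^2 < 2 * \<beta> * \<nu>"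
  shows "integral {a..q} f > \<eta>^2 / (2 * \<nu>)"
proof -
  define m where "m = a + \<eta> / \<nu>"
  have en: "\<eta> / \<nu> > 0" using assms(2) nu by simp
  have am: "a \<le> m" using en unfolding m_def by linarith
  have mq: "m \<le> q" using assms(1) unfolding m_def by linarith
  have Lm: "integral {a..m} f \<ge> \<eta>^2 / (2 * \<nu>)"
  proof -
    have mn: "min (m - a) (\<eta> / \<nu>) = \<eta> / \<nu>" unfolding m_def by simp
    have "integral {a..m} f \<ge> \<eta> * (\<eta> / \<nu>) - \<nu> * (\<eta> / \<nu>)^2 / 2"
      using F_lower[OF am less_imp_le[OF assms(2)]] unfolding mn .
    moreover have "\<eta> * (\<eta> / \<nu>) - \<nu> * (\<eta> / \<nu>)^2 / 2 = \<eta>^2 / (2 * \<nu>)"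
      using nu by (simp add: field_simps power2_eq_square)
    ultimately show ?thesis by linarith
  qed
  show ?thesis
  proof (cases "f q = 0")
    case True
    have "f x = 0" if "x \<in> {q..}" for x
    proof -
      have qx: "q \<le> x" using that by simp
      have aq: "a \<le> q" using am mq by linarith
      have "f x \<le> f q" by (rule F_mono[OF aq qx])
      moreover have "f x \<ge> 0" by (rule F_nonneg) (use aq qx in linarith)
      ultimately show ?thesis using True by linarith
    qed
    then have z: "\<And>x. x \<in> {q..} \<Longrightarrow> (\<lambda>_. 0::real) x = f x" by simp
    have "(f has_integral 0) {q..}"
      by (rule has_integral_eq[where f="\<lambda>_. 0" and g=f, OF z has_integral_0])
    then have "\<beta> - integral {a..q} f = 0"
      using has_integral_unique[OF F_tail[OF order_trans[OF am mq]]] by blast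
    moreover have "\<eta>^2 / (2 * \<nu>) < \<beta>" using assms(3) nu by (simp add: divide_less_eq algebra_simps)
    ultimately show ?thesis by simp
  next
    case False
    have "f q \<ge> 0" by (rule F_nonneg) (use am mq in linarith)
    then have fq: "f q > 0" using False by linarith
    have I2: "f integrable_on {m..q}"
      by (rule integrable_on_subinterval[OF F_int[of q]]) (use am in auto)
    have "integral {m..q} (\<lambda>_. f q) \<le> integral {m..q} f"
    proof (rule integral_le[OF integrable_const_ivl I2])
      fix x assume "x \<in> {m..q}"
      then show "f q \<le> f x" using F_mono[of x q] am by auto
    qed
    moreover have "integral {m..q} (\<lambda>_. f q) = (q - m) * f q" using mq by simp
    moreover have "(q - m) * f q > 0"
    proof -
      have "q - m > 0" using assms(1) unfolding m_def by linarith
      then show ?thesis using fq by simp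
    qed
    moreover have "integral {a..q} f = integral {a..m} f + integral {m..q} f"
      using Henstock_Kurzweil_Integration.integral_combine[OF am mq F_int[of q]] by simp
    ultimately show ?thesis using Lm by linarith
  qed
qed

end



lemma ereal_eps:
  fixes X d e :: real and S :: ereal
  assumes e: "e > 0" and d: "d \<ge> 0" and H: "\<And>c. 0 < c \<Longrightarrow> c < e \<Longrightarrow> ereal (X - c * d) \<le> S"
  shows "ereal X \<le> S"
proof (cases S)
  case PInf then show ?thesis by simp
next
  case MInf
  have "ereal (X - (e/2) * d) \<le> S" by (rule H) (use e in auto)
  then show ?thesis using MInf by simp
next
  case (real r)
  show ?thesis
  proof (rule ccontr)
    assume "\<not> ereal X \<le> S"
    then have rX: "r < X" using real by simp
    define c where "c = min (e/2) ((X - r) / (2 * (d + 1)))"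
    have c0: "c > 0" using e rX d unfolding c_def by simp
    have ce: "c < e" using e unfolding c_def by simp
    have "c * d \<le> ((X - r) / (2 * (d + 1))) * d"
      using d unfolding c_def by (intro mult_right_mono) auto
    also have "\<dots> \<le> (X - r) / 2"
      using d rX by (simp add: field_simps)
    finally have "c * d \<le> (X - r) / 2" .
    moreover have "X - c * d \<le> r" using H[OF c0 ce] real by simp
    ultimately have A: "c * d \<le> (X - r) / 2" and B: "X - c * d \<le> r" by auto
    have "X - r \<le> c * d" using B by linarith
    then have "X - r \<le> (X - r) / 2" using A by linarith
    then show False using rX by (simp add: field_simps)
  qed
qed

lemma ereal_Sup_inf:
  fixes A :: "ereal set"
  assumes "\<And>M. \<exists>x\<in>A. ereal M \<le> x"
  shows "Sup A = \<infinity>"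
proof -
  have le: "ereal M \<le> Sup A" for M
    using assms[of M] by (meson Sup_upper order_trans)
  show ?thesis
  proof (cases "Sup A")
    case (real r)
    then show ?thesis using le[of "r + 1"] by simp
  next
    case MInf then show ?thesis using le[of 0] by simp
  qed simp
qed

context
  fixes a \<beta> \<eta> \<nu> :: real
  assumes bp: "\<beta> > 0" and ep: "\<eta> > 0" and np: "\<nu> > 0" and ineq: "\<eta>^2 < 2 * \<beta> * \<nu>"
begin

lemma Kpos: "\<eta>^2 / (2 * \<nu>) < \<beta>"
  using ineq np by (simp add: divide_less_eq algebra_simps)

lemma witness:
  assumes c: "0 < c" "c < \<eta>"
  shows "\<exists>f. feasible a \<beta> \<eta> \<nu> f \<and>
     (\<forall>x. a \<le> x \<and> x \<le> a + (\<eta> - c) / \<nu> \<longrightarrow> f x = \<eta> - \<nu> * (x - a)) \<and>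
     (\<forall>x. a + (\<eta> - c) / \<nu> \<le> x \<longrightarrow> 0 \<le> f x \<and> f x \<le> c) \<and>
     (\<exists>E \<ge> a + (\<eta> - c) / \<nu>. \<forall>x \<ge> E. f x = 0)"
proof -
  define t where "t = (\<eta> - c) / \<nu>"
  have t0: "t > 0" using c np unfolding t_def by simp
  have ct: "\<eta> = c + \<nu> * t" unfolding t_def using np by simp
  define B where "B = \<beta> - (\<eta> * t - \<nu> * t^2 / 2)"
  have G_eq: "\<eta> * t - \<nu> * t^2 / 2 = (\<eta>^2 - c^2) / (2 * \<nu>)"
    unfolding t_def using np by (simp add: field_simps power2_eq_square)
  have B_eq: "B = (\<beta> - \<eta>^2 / (2 * \<nu>)) + c^2 / (2 * \<nu>)"
    unfolding B_def G_eq by (simp add: diff_divide_distrib)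
  have c2: "c^2 / (2 * \<nu>) > 0" using c np by simp
  have Bpos: "B > 0" using Kpos c2 B_eq by linarith
  define s where "s = c^2 / (2 * B)"
  have s0: "s > 0" using c Bpos unfolding s_def by simp
  have h1: "2 * \<nu> * (\<eta>^2 / (2 * \<nu>)) = \<eta>^2" using np by simp
  have h2: "2 * \<nu> * (c^2 / (2 * \<nu>)) = c^2" using np by simp
  have nB: "2 * \<nu> * B = 2 * \<nu> * \<beta> - \<eta>^2 + c^2"
    unfolding B_eq using h1 h2 by (simp add: distrib_left right_diff_distrib)
  have "2 * \<beta> * \<nu> = 2 * \<nu> * \<beta>" by simp
  then have "c^2 \<le> 2 * \<nu> * B" using nB ineq by linarith
  moreover have "\<nu> * (2 * B) = 2 * \<nu> * B" by simp
  ultimately have "c^2 \<le> \<nu> * (2 * B)" by linarith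
  then have sn: "s \<le> \<nu>" unfolding s_def using Bpos by (simp add: divide_le_eq)
  have Bs: "c * (c / s) - s * (c / s)^2 / 2 = B"
    unfolding s_def using c Bpos by (simp add: field_simps power2_eq_square)
  define E where "E = a + t + c / s"
  have tE: "a + t \<le> E" using c s0 unfolding E_def by simp
  define f where "f = (\<lambda>x. max 0 (max (\<eta> - \<nu> * (x - a)) (c - s * (x - a - t))))"
  have P1: "c - s * (x - a - t) \<le> \<eta> - \<nu> * (x - a)" if "x \<le> a + t" for x
  proof -
    have "s * (a + t - x) \<le> \<nu> * (a + t - x)" using sn that by (intro mult_right_mono) auto
    then show ?thesis by (simp add: algebra_simps ct)
  qed
  have P2: "\<eta> - \<nu> * (x - a) \<le> c - s * (x - a - t)" if "x \<ge> a + t" for x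
  proof -
    have "s * (x - a - t) \<le> \<nu> * (x - a - t)" using sn that by (intro mult_right_mono) auto
    then show ?thesis by (simp add: algebra_simps ct)
  qed
  have P3: "\<eta> - \<nu> * (x - a) \<ge> c" if "x \<le> a + t" for x
  proof -
    have "0 \<le> \<nu> * (a + t - x)" using np that by simp
    then show ?thesis by (simp add: algebra_simps ct)
  qed
  have F1: "f x = \<eta> - \<nu> * (x - a)" if "x \<le> a + t" for x
  proof -
    have "max (\<eta> - \<nu> * (x - a)) (c - s * (x - a - t)) = \<eta> - \<nu> * (x - a)"
      by (rule max_absorb1[OF P1[OF that]])
    moreover have "0 \<le> \<eta> - \<nu> * (x - a)" using P3[OF that] c by linarith
    ultimately show ?thesis unfolding f_def by simp
  qed
  have F2: "f x = max 0 (c - s * (x - a - t))" if "x \<ge> a + t" for x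
  proof -
    have "max (\<eta> - \<nu> * (x - a)) (c - s * (x - a - t)) = c - s * (x - a - t)"
      by (rule max_absorb2[OF P2[OF that]])
    then show ?thesis unfolding f_def by simp
  qed
  have Fb: "0 \<le> f x \<and> f x \<le> c" if "x \<ge> a + t" for x
  proof -
    have "0 \<le> s * (x - a - t)" using s0 that by simp
    then show ?thesis using F2[OF that] c by simp
  qed
  have F3: "f x = 0" if "x \<ge> E" for x
  proof -
    have "s * (c / s) \<le> s * (x - a - t)" using s0 that unfolding E_def by (intro mult_left_mono) auto
    then have "c \<le> s * (x - a - t)" using s0 by simp
    then show ?thesis using F2[of x] that tE by simp
  qed
  have F4: "c - s * (x - (a + t)) = f x" if "x \<in> {a+t..E}" for x
  proof -
    have "s * (x - a - t) \<le> s * (c / s)" using s0 that unfolding E_def by (intro mult_left_mono) auto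
    then have "s * (x - a - t) \<le> c" using s0 by simp
    then show ?thesis using F2[of x] that by (simp add: algebra_simps)
  qed
  have L1: "((\<lambda>x. \<eta> - \<nu> * (x - a)) has_integral (\<eta> * t - \<nu> * t^2 / 2)) {a..a+t}"
    using lin_int[of a "a+t" \<eta> \<nu>] t0 by simp
  have I1: "(f has_integral (\<eta> * t - \<nu> * t^2 / 2)) {a..a+t}"
    by (rule has_integral_eq[OF _ L1]) (simp add: F1)
  have L2: "((\<lambda>x. c - s * (x - (a + t))) has_integral B) {a+t..E}"
    using lin_int[of "a+t" E c s] tE Bs unfolding E_def by simp
  have I2: "(f has_integral B) {a+t..E}"
    by (rule has_integral_eq[OF _ L2]) (rule F4)
  have z: "\<And>x. x \<in> {E..} \<Longrightarrow> (\<lambda>_. 0::real) x = f x" using F3 by simp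
  have I3: "(f has_integral 0) {E..}"
    by (rule has_integral_eq[where f="\<lambda>_. 0" and g=f, OF z has_integral_0])
  have I12: "(f has_integral (\<eta> * t - \<nu> * t^2 / 2 + B)) {a..E}"
    by (rule has_integral_combine[OF _ tE I1 I2]) (use t0 in simp)
  have negl: "negligible ({a..E} \<inter> {E..})"
    by (rule negligible_subset[of "{E}"]) auto
  have "(f has_integral (\<eta> * t - \<nu> * t^2 / 2 + B + 0)) ({a..E} \<union> {E..})"
    by (rule has_integral_Un[OF I12 I3 negl])
  moreover have "{a..E} \<union> {E..} = {a..}" using tE t0 by auto
  moreover have "\<eta> * t - \<nu> * t^2 / 2 + B + 0 = \<beta>" unfolding B_def by simp
  ultimately have Itot: "(f has_integral \<beta>) {a..}" by simp
  have fa: "f a = \<eta>" using F1[of a] t0 by simp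
  have "isCont f a" unfolding f_def by (intro continuous_intros)
  then have lim: "(f \<longlongrightarrow> \<eta>) (at_right a)"
    unfolding isCont_def fa by (rule tendsto_mono[rotated]) (rule at_le, simp)
  have dline: "((\<lambda>x. \<eta> - \<nu> * (x - a)) has_real_derivative (- \<nu>)) (at a within {a..})"
    by (auto intro!: derivative_eq_intros)
  have der: "(f has_real_derivative (- \<nu>)) (at a within {a..})"
  proof (rule has_field_derivative_transform_within[OF dline t0])
    show "a \<in> {a..}" by simp
    fix x assume "x \<in> {a..}" "dist x a < t"
    then have "x \<le> a + t" by (simp add: dist_real_def)
    then show "\<eta> - \<nu> * (x - a) = f x" using F1 by simp
  qed
  have fe: "f = (\<lambda>x. max 0 (max ((\<eta> + \<nu> * a) - \<nu> * x) ((c + s * (a + t)) - s * x)))"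
    unfolding f_def by (rule ext) (simp add: algebra_simps)
  have cv: "convex_on {a..} f"
    unfolding fe by (rule convex_on_subset[OF max3_convex]) auto
  have nn: "\<forall>x\<ge>a. f x \<ge> 0" unfolding f_def by simp
  have feas: "feasible a \<beta> \<eta> \<nu> f"
    unfolding feasible_def using Itot fa lim der cv nn by auto
  show ?thesis
    unfolding t_def[symmetric]
    using feas F1 Fb tE F3 by blast
qed


lemma Gmono:
  assumes "t < t'" "t' \<le> \<eta> / \<nu>"
  shows "\<eta> * t - \<nu> * t^2 / 2 < \<eta> * t' - \<nu> * t'^2 / 2"
proof -
  have "\<nu> * t' \<le> \<eta>" using assms(2) np by (simp add: le_divide_eq mult.commute)
  moreover have "\<nu> * t < \<nu> * t'" using assms(1) np by simp
  ultimately have pos: "\<eta> - \<nu> * (t + t') / 2 > 0" by (simp add: algebra_simps)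
  have "(\<eta> * t' - \<nu> * t'^2 / 2) - (\<eta> * t - \<nu> * t^2 / 2) = (t' - t) * (\<eta> - \<nu> * (t + t') / 2)"
    by (simp add: field_simps power2_eq_square)
  moreover have "(t' - t) * (\<eta> - \<nu> * (t + t') / 2) > 0" using pos assms(1) by simp
  ultimately show ?thesis by linarith
qed

lemma Gmax: "\<eta> * t - \<nu> * t^2 / 2 \<le> \<eta>^2 / (2 * \<nu>)"
proof -
  have "\<eta>^2 / (2 * \<nu>) - (\<eta> * t - \<nu> * t^2 / 2) = \<nu> * (t - \<eta> / \<nu>)^2 / 2"
    using np by (simp add: field_simps power2_eq_square)
  moreover have "\<nu> * (t - \<eta> / \<nu>)^2 / 2 \<ge> 0" using np by simp
  ultimately show ?thesis by linarith
qed

lemma wprops: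
  assumes c: "0 < c" "c < \<eta>"
  obtains f where "feasible a \<beta> \<eta> \<nu> f"
    "integral {a..a + (\<eta> - c) / \<nu>} f = \<eta> * ((\<eta> - c) / \<nu>) - \<nu> * ((\<eta> - c) / \<nu>)^2 / 2"
    "\<And>b. a \<le> b \<Longrightarrow> integral {a..b} f \<le> \<eta> * ((\<eta> - c) / \<nu>) - \<nu> * ((\<eta> - c) / \<nu>)^2 / 2 + c * (b - a)"
    "\<And>M y. a \<le> M \<Longrightarrow> integral {a..M} f \<le> y \<Longrightarrow> y \<le> \<beta> \<Longrightarrow> \<exists>q\<ge>M. integral {a..q} f = y"
proof -
  define t where "t = (\<eta> - c) / \<nu>"
  have t0: "t > 0" using c np unfolding t_def by simp
  obtain f where feas: "feasible a \<beta> \<eta> \<nu> f"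
    and F1: "\<forall>x. a \<le> x \<and> x \<le> a + t \<longrightarrow> f x = \<eta> - \<nu> * (x - a)"
    and Fb: "\<forall>x. a + t \<le> x \<longrightarrow> 0 \<le> f x \<and> f x \<le> c"
    and FE: "\<exists>E \<ge> a + t. \<forall>x \<ge> E. f x = 0"
    using witness[OF c] unfolding t_def by blast
  have L1: "((\<lambda>x. \<eta> - \<nu> * (x - a)) has_integral (\<eta> * t - \<nu> * t^2 / 2)) {a..a+t}"
    using lin_int[of a "a+t" \<eta> \<nu>] t0 by simp
  have "(f has_integral (\<eta> * t - \<nu> * t^2 / 2)) {a..a+t}"
    by (rule has_integral_eq[OF _ L1]) (use F1 in simp)
  then have W1: "integral {a..a+t} f = \<eta> * t - \<nu> * t^2 / 2" by (rule integral_unique)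
  have W2: "integral {a..b} f \<le> \<eta> * t - \<nu> * t^2 / 2 + c * (b - a)" if ab: "a \<le> b" for b
  proof (cases "b \<le> a + t")
    case True
    have "integral {a..a+t} f = integral {a..b} f + integral {b..a+t} f"
      using Henstock_Kurzweil_Integration.integral_combine[OF ab True F_int[OF feas np]] by simp
    moreover have "integral {b..a+t} f \<ge> 0"
    proof (rule integral_nonneg)
      show "f integrable_on {b..a+t}"
        by (rule integrable_on_subinterval[OF F_int[OF feas np, of "a+t"]]) (use ab in auto)
    qed (use ab F_nonneg[OF feas np] in auto)
    moreover have "c * (b - a) \<ge> 0" using c ab by simp
    ultimately show ?thesis using W1 by linarith
  next
    case False
    have at: "a \<le> a + t" using t0 by simp
    have tb: "a + t \<le> b" using False by simp
    have "integral {a..b} f = integral {a..a+t} f + integral {a+t..b} f"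
      using Henstock_Kurzweil_Integration.integral_combine[OF at tb F_int[OF feas np]] by simp
    moreover have "integral {a+t..b} f \<le> integral {a+t..b} (\<lambda>_. c)"
    proof (rule integral_le[OF _ integrable_const_ivl])
      show "f integrable_on {a+t..b}"
        by (rule integrable_on_subinterval[OF F_int[OF feas np, of b]]) (use at in auto)
      fix x assume "x \<in> {a+t..b}" then show "f x \<le> c" using Fb by auto
    qed
    moreover have "integral {a+t..b} (\<lambda>_. c) = (b - (a + t)) * c" using tb by simp
    moreover have "(b - (a + t)) * c \<le> c * (b - a)" using c t0 by (simp add: algebra_simps)
    ultimately show ?thesis using W1 by linarith
  qed
  obtain E where E: "E \<ge> a + t" "\<And>x. x \<ge> E \<Longrightarrow> f x = 0" using FE by blast
  have W3: "\<exists>q\<ge>M. integral {a..q} f = y"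
    if M: "a \<le> M" "integral {a..M} f \<le> y" "y \<le> \<beta>" for M y
  proof -
    define E' where "E' = max E M"
    have aE: "a \<le> E'" using M unfolding E'_def by simp
    have z: "\<And>x. x \<in> {E'..} \<Longrightarrow> (\<lambda>_. 0::real) x = f x" using E(2) unfolding E'_def by simp
    have "(f has_integral 0) {E'..}"
      by (rule has_integral_eq[where f="\<lambda>_. 0" and g=f, OF z has_integral_0])
    then have "\<beta> - integral {a..E'} f = 0"
      using has_integral_unique[OF F_tail[OF feas np aE]] by blast
    then have IE: "integral {a..E'} f = \<beta>" by simp
    have "continuous_on {a..E'} (\<lambda>x. integral {a..x} f)"
      by (rule indefinite_integral_continuous_1[OF F_int[OF feas np]])
    then have cont: "continuous_on {M..E'} (\<lambda>x. integral {a..x} f)"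
      by (rule continuous_on_subset) (use M in auto)
    have ME: "M \<le> E'" unfolding E'_def by simp
    obtain q where "M \<le> q" "q \<le> E'" "integral {a..q} f = y"
      using IVT'[of "\<lambda>x. integral {a..x} f" M y E', OF M(2) _ ME cont] IE M(3) by auto
    then show ?thesis by blast
  qed
  show ?thesis
    by (rule that[OF feas]) (use W1 W2 W3 in \<open>simp_all add: t_def\<close>)
qed

lemma zstar_upper:
  assumes "feasible a \<beta> \<eta> \<nu> f"
  shows "ereal (integral {b..} f) \<le> zstar a \<beta> \<eta> \<nu> b"
  unfolding zstar_def by (rule Sup_upper) (use assms in blast)

lemma zstar_le:
  assumes ab: "a \<le> b"
  shows "zstar a \<beta> \<eta> \<nu> b \<le> ereal (\<beta> - (\<eta> * min (b - a) (\<eta> / \<nu>) - \<nu> * (min (b - a) (\<eta> / \<nu>))^2 / 2))"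
  unfolding zstar_def
proof (rule Sup_least)
  fix x assume "x \<in> {ereal (integral {b..} f) |f. feasible a \<beta> \<eta> \<nu> f}"
  then obtain f where x: "x = ereal (integral {b..} f)" and feas: "feasible a \<beta> \<eta> \<nu> f" by blast
  have "integral {b..} f = \<beta> - integral {a..b} f" by (rule F_tail_eq[OF feas np ab])
  moreover have "integral {a..b} f \<ge> \<eta> * min (b - a) (\<eta> / \<nu>) - \<nu> * (min (b - a) (\<eta> / \<nu>))^2 / 2"
    by (rule F_lower[OF feas np ab]) (use ep in simp)
  ultimately show "x \<le> ereal (\<beta> - (\<eta> * min (b - a) (\<eta> / \<nu>) - \<nu> * (min (b - a) (\<eta> / \<nu>))^2 / 2))"
    unfolding x by simp
qed

lemma zstar_K:
  assumes ab: "a \<le> b"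
  shows "ereal (\<beta> - \<eta>^2 / (2 * \<nu>)) \<le> zstar a \<beta> \<eta> \<nu> b"
proof (rule ereal_eps[OF ep, of "b - a"])
  show "b - a \<ge> 0" using ab by simp
  fix c assume c: "0 < c" "c < \<eta>"
  obtain f where feas: "feasible a \<beta> \<eta> \<nu> f"
    and W2: "\<And>b. a \<le> b \<Longrightarrow> integral {a..b} f \<le> \<eta> * ((\<eta> - c) / \<nu>) - \<nu> * ((\<eta> - c) / \<nu>)^2 / 2 + c * (b - a)"
    using wprops[OF c] by metis
  have "integral {b..} f = \<beta> - integral {a..b} f" by (rule F_tail_eq[OF feas np ab])
  moreover note W2[OF ab] Gmax[of "(\<eta> - c) / \<nu>"]
  ultimately have "\<beta> - \<eta>^2 / (2 * \<nu>) - c * (b - a) \<le> integral {b..} f" by linarith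
  then have "ereal (\<beta> - \<eta>^2 / (2 * \<nu>) - c * (b - a)) \<le> ereal (integral {b..} f)" by simp
  also have "\<dots> \<le> zstar a \<beta> \<eta> \<nu> b" by (rule zstar_upper[OF feas])
  finally show "ereal (\<beta> - \<eta>^2 / (2 * \<nu>) - c * (b - a)) \<le> zstar a \<beta> \<eta> \<nu> b" .
qed

lemma zstar_low:
  assumes ab: "a \<le> b" and bm: "b < a + \<eta> / \<nu>"
  shows "ereal (\<beta> - (\<eta> * (b - a) - \<nu> * (b - a)^2 / 2)) \<le> zstar a \<beta> \<eta> \<nu> b"
proof (cases "b = a")
  case True
  have c: "0 < \<eta>/2" "\<eta>/2 < \<eta>" using ep by auto
  obtain f where feas: "feasible a \<beta> \<eta> \<nu> f" using wprops[OF c] by metis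
  have "integral {b..} f = \<beta> - integral {a..b} f" by (rule F_tail_eq[OF feas np ab])
  then have "integral {b..} f = \<beta>" using True by simp
  then show ?thesis using zstar_upper[OF feas, of b] True by simp
next
  case False
  define c where "c = \<eta> - \<nu> * (b - a)"
  have "b - a < \<eta> / \<nu>" using bm by simp
  then have "(b - a) * \<nu> < \<eta>" using np by (simp add: less_divide_eq)
  then have "\<nu> * (b - a) < \<eta>" by (simp add: mult.commute)
  then have c: "0 < c" "c < \<eta>" using False ab np unfolding c_def by auto
  have tc: "(\<eta> - c) / \<nu> = b - a" unfolding c_def using np by simp
  obtain f where feas: "feasible a \<beta> \<eta> \<nu> f"
    and W1: "integral {a..a + (\<eta> - c) / \<nu>} f = \<eta> * ((\<eta> - c) / \<nu>) - \<nu> * ((\<eta> - c) / \<nu>)^2 / 2"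
    using wprops[OF c] by metis
  have "integral {b..} f = \<beta> - integral {a..b} f" by (rule F_tail_eq[OF feas np ab])
  then have "integral {b..} f = \<beta> - (\<eta> * (b - a) - \<nu> * (b - a)^2 / 2)" using W1 unfolding tc by simp
  then show ?thesis using zstar_upper[OF feas, of b] by simp
qed

end


theorem theorem4:
  fixes a \<beta> \<eta> \<nu> \<mu> \<sigma> p :: real
  assumes "\<beta> > 0" "\<eta> > 0" "\<nu> > 0" "\<eta>\<^sup>2 < 2 * \<beta> * \<nu>"
    and "\<mu> = \<eta> / \<nu>" "\<sigma> = 2 * \<beta> / \<nu>"
    and "1 - \<beta> \<le> p" "p \<le> 1"
  shows "quantile_value a \<beta> \<eta> \<nu> p = qstar a \<beta> \<eta> \<nu> p \<and>
    (p \<le> 1 - \<beta> + \<eta>\<^sup>2 / (2 * \<nu>) \<longrightarrow>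
       qstar a \<beta> \<eta> \<nu> p = ereal (a + \<mu> - sqrt (\<mu>\<^sup>2 - \<sigma> + 2 * (1 - p) / \<nu>))) \<and>
    (p > 1 - \<beta> + \<eta>\<^sup>2 / (2 * \<nu>) \<longrightarrow> qstar a \<beta> \<eta> \<nu> p = \<infinity>)"
proof -
  note A = assms(1-4)
  have np: "\<nu> > 0" and ep: "\<eta> > 0" using assms by auto
  define K where "K = \<beta> - \<eta>^2 / (2 * \<nu>)"
  define r where "r = 1 - p"
  define G where "G = (\<lambda>t::real. \<eta> * t - \<nu> * t^2 / 2)"
  have Kp: "K > 0" using Kpos[OF A] unfolding K_def by simp
  have r0: "0 \<le> r" "r \<le> \<beta>" using assms(7,8) unfolding r_def by auto
  have Gm: "G (\<eta> / \<nu>) = \<eta>^2 / (2 * \<nu>)"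
    unfolding G_def using np by (simp add: field_simps power2_eq_square)
  have zK: "ereal K \<le> zstar a \<beta> \<eta> \<nu> b" if "a \<le> b" for b
    using zstar_K[OF A that] unfolding K_def .
  have Qmem: "ereal q \<in> {ereal q | q f. q \<ge> a \<and> feasible a \<beta> \<eta> \<nu> f \<and> (1 - \<beta>) + integral {a..q} f = p}"
    if "q \<ge> a" "feasible a \<beta> \<eta> \<nu> f" "integral {a..q} f = \<beta> - r" for q f
    using that unfolding r_def by auto
  show ?thesis
  proof (cases "p \<le> 1 - \<beta> + \<eta>\<^sup>2 / (2 * \<nu>)")
    case True
    define R where "R = \<mu>\<^sup>2 - \<sigma> + 2 * (1 - p) / \<nu>"
    define t0 where "t0 = \<mu> - sqrt R"
    have R_eq: "R = (\<eta>^2 - 2 * \<nu> * (\<beta> - r)) / \<nu>^2"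
      unfolding R_def r_def assms(5,6) using np by (simp add: field_simps power2_eq_square)
    have "2 * \<nu> * (\<beta> - r) \<le> \<eta>^2"
    proof -
      have "\<beta> - r \<le> \<eta>^2 / (2 * \<nu>)" using True unfolding r_def by simp
      then show ?thesis using np by (simp add: le_divide_eq mult.commute mult.left_commute)
    qed
    then have R0: "R \<ge> 0" unfolding R_eq by simp
    have Rmu: "R \<le> \<mu>^2"
    proof -
      have "R = \<mu>^2 - 2 * (\<beta> - r) / \<nu>" unfolding R_def assms(6) r_def by (simp add: diff_divide_distrib)
      moreover have "2 * (\<beta> - r) / \<nu> \<ge> 0" using r0 np by simp
      ultimately show ?thesis by linarith
    qed
    have mu0: "\<mu> > 0" unfolding assms(5) using np ep by simp
    have sqR: "sqrt R \<le> \<mu>"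
      using real_sqrt_le_mono[OF Rmu] mu0 by simp
    have t00: "0 \<le> t0" unfolding t0_def using sqR by simp
    have t0m: "t0 \<le> \<eta> / \<nu>" unfolding t0_def assms(5)[symmetric] using R0 by simp
    have Gt0: "G t0 = \<beta> - r"
    proof -
      have sq: "(\<mu> - t0)^2 = R" unfolding t0_def using R0 by simp
      have "G t0 = \<nu> / 2 * (\<mu>^2 - (\<mu> - t0)^2)"
        unfolding G_def assms(5) using np by (simp add: field_simps power2_eq_square)
      also have "\<dots> = \<nu> / 2 * (\<mu>^2 - R)" unfolding sq ..
      also have "\<dots> = \<beta> - r"
        unfolding R_def assms(6) r_def using np by (simp add: field_simps power2_eq_square)
      finally show ?thesis .
    qed
    have eqform: "a + \<mu> - sqrt (\<mu>\<^sup>2 - \<sigma> + 2 * (1 - p) / \<nu>) = a + t0"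
      unfolding t0_def R_def by simp
    have zt0: "zstar a \<beta> \<eta> \<nu> (a + t0) = ereal r"
    proof (rule antisym)
      have "min (a + t0 - a) (\<eta> / \<nu>) = t0" using t0m by simp
      then show "zstar a \<beta> \<eta> \<nu> (a + t0) \<le> ereal r"
        using zstar_le[OF A, where a=a and b="a + t0"] t00 Gt0 unfolding G_def by simp
    next
      show "ereal r \<le> zstar a \<beta> \<eta> \<nu> (a + t0)"
      proof (cases "t0 = \<eta> / \<nu>")
        case True
        then have "r = K" using Gt0 Gm unfolding K_def by simp
        then show ?thesis using zK[of "a + t0"] t00 by simp
      next
        case False
        then have lt: "a + t0 < a + \<eta> / \<nu>" using t0m by simp
        have "a \<le> a + t0" using t00 by simp
        from zstar_low[OF A this lt] show ?thesis using Gt0 unfolding G_def by simp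
      qed
    qed
    have qs: "qstar a \<beta> \<eta> \<nu> p = ereal (a + t0)"
      unfolding qstar_def
    proof (rule antisym)
      show "Inf {ereal b |b. a \<le> b \<and> zstar a \<beta> \<eta> \<nu> b = ereal (1 - p)} \<le> ereal (a + t0)"
        by (rule Inf_lower) (use zt0 t00 r_def in auto)
    next
      show "ereal (a + t0) \<le> Inf {ereal b |b. a \<le> b \<and> zstar a \<beta> \<eta> \<nu> b = ereal (1 - p)}"
      proof (rule Inf_greatest)
        fix x assume "x \<in> {ereal b |b. a \<le> b \<and> zstar a \<beta> \<eta> \<nu> b = ereal (1 - p)}"
        then obtain b where x: "x = ereal b" and ab: "a \<le> b" and zb: "zstar a \<beta> \<eta> \<nu> b = ereal r"
          unfolding r_def by blast
        show "ereal (a + t0) \<le> x"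
        proof (rule ccontr)
          assume "\<not> ereal (a + t0) \<le> x"
          then have b_lt: "b < a + t0" unfolding x by simp
          then have "b < a + \<eta> / \<nu>" using t0m by simp
          from zstar_low[OF A ab this] have "ereal (\<beta> - G (b - a)) \<le> zstar a \<beta> \<eta> \<nu> b"
            unfolding G_def .
          moreover have "G (b - a) < G t0" unfolding G_def by (rule Gmono[OF A]) (use b_lt t0m in auto)
          ultimately show False using zb Gt0 by simp
        qed
      qed
    qed
    have qv: "quantile_value a \<beta> \<eta> \<nu> p = ereal (a + t0)"
      unfolding quantile_value_def
    proof (rule antisym)
      show "Sup {ereal q |q f. a \<le> q \<and> feasible a \<beta> \<eta> \<nu> f \<and> 1 - \<beta> + integral {a..q} f = p} \<le> ereal (a + t0)"
      proof (rule Sup_least)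
        fix x assume "x \<in> {ereal q |q f. a \<le> q \<and> feasible a \<beta> \<eta> \<nu> f \<and> 1 - \<beta> + integral {a..q} f = p}"
        then obtain q f where x: "x = ereal q" and aq: "a \<le> q" and feas: "feasible a \<beta> \<eta> \<nu> f"
          and I: "integral {a..q} f = G t0" using Gt0 unfolding r_def by auto
        show "x \<le> ereal (a + t0)"
        proof (rule ccontr)
          assume "\<not> x \<le> ereal (a + t0)"
          then have qt: "q > a + t0" unfolding x by simp
          show False
          proof (cases "t0 = \<eta> / \<nu>")
            case True
            have "integral {a..q} f > \<eta>^2 / (2 * \<nu>)"
              by (rule F_boundary[OF feas np]) (use qt True A in auto)
            then show False using I True Gm by simp
          next
            case False
            define m where "m = min (q - a) (\<eta> / \<nu>)"
            have "t0 < m" unfolding m_def using qt False t0m by simp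
            then have "G t0 < G m" unfolding G_def by (rule Gmono[OF A]) (simp add: m_def)
            moreover have "integral {a..q} f \<ge> G m"
              unfolding G_def m_def by (rule F_lower[OF feas np aq]) (use ep in simp)
            ultimately show False using I by simp
          qed
        qed
      qed
    next
      show "ereal (a + t0) \<le> Sup {ereal q |q f. a \<le> q \<and> feasible a \<beta> \<eta> \<nu> f \<and> 1 - \<beta> + integral {a..q} f = p}"
        (is "_ \<le> Sup ?Q")
      proof (cases "t0 = \<eta> / \<nu>")
        case True
        show ?thesis
        proof (rule ereal_eps[OF ep, of "1 / \<nu>"])
          show "0 \<le> 1 / \<nu>" using np by simp
          fix c assume c: "0 < c" "c < \<eta>"
          obtain f where feas: "feasible a \<beta> \<eta> \<nu> f"
            and W1: "integral {a..a + (\<eta> - c) / \<nu>} f = G ((\<eta> - c) / \<nu>)"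
            and W3: "\<And>M y. a \<le> M \<Longrightarrow> integral {a..M} f \<le> y \<Longrightarrow> y \<le> \<beta> \<Longrightarrow> \<exists>q\<ge>M. integral {a..q} f = y"
            using wprops[OF A c] unfolding G_def by metis
          have tpos: "(\<eta> - c) / \<nu> \<ge> 0" using c np by simp
          have "G ((\<eta> - c) / \<nu>) \<le> \<eta>^2 / (2 * \<nu>)" unfolding G_def by (rule Gmax[OF A])
          moreover have "\<eta>^2 / (2 * \<nu>) \<le> \<beta>" using Kp unfolding K_def by simp
          ultimately obtain q where q: "q \<ge> a + (\<eta> - c) / \<nu>" "integral {a..q} f = \<eta>^2 / (2 * \<nu>)"
            using W3[of "a + (\<eta> - c) / \<nu>" "\<eta>^2 / (2 * \<nu>)"] W1 tpos by auto
          have "ereal q \<in> ?Q" by (rule Qmem) (use q tpos feas Gt0 Gm True in auto)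
          then have "ereal q \<le> Sup ?Q" by (rule Sup_upper)
          moreover have "a + t0 - c * (1 / \<nu>) \<le> q"
            using q(1) True np by (simp add: diff_divide_distrib)
          ultimately show "ereal (a + t0 - c * (1 / \<nu>)) \<le> Sup ?Q"
            by (meson ereal_less_eq(3) order_trans)
        qed
      next
        case False
        show ?thesis
        proof (cases "t0 = 0")
          case True
          have c: "0 < \<eta>/2" "\<eta>/2 < \<eta>" using ep by auto
          obtain f where feas: "feasible a \<beta> \<eta> \<nu> f" using wprops[OF A c] by metis
          have "G t0 = 0" unfolding G_def True by simp
          then have "ereal a \<in> ?Q" using Qmem[of a f] feas Gt0 by simp
          then show ?thesis using True by (simp add: Sup_upper)
        next
          case t0nz: False
          define c where "c = \<eta> - \<nu> * t0"
          have "t0 < \<eta> / \<nu>" using False t0m by simp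
          then have "t0 * \<nu> < \<eta>" using np by (simp add: less_divide_eq)
          then have c: "0 < c" "c < \<eta>" unfolding c_def using t00 t0nz np by (auto simp: mult.commute)
          have tc: "(\<eta> - c) / \<nu> = t0" unfolding c_def using np by simp
          obtain f where feas: "feasible a \<beta> \<eta> \<nu> f"
            and W1: "integral {a..a + (\<eta> - c) / \<nu>} f = G ((\<eta> - c) / \<nu>)"
            using wprops[OF A c] unfolding G_def by metis
          have "ereal (a + t0) \<in> ?Q" by (rule Qmem) (use feas W1 tc t00 Gt0 in auto)
          then show ?thesis by (rule Sup_upper)
        qed
      qed
    qed
    show ?thesis using qv qs eqform True by simp
  next
    case False
    then have rK: "r < K" unfolding r_def K_def by simp
    have qs: "qstar a \<beta> \<eta> \<nu> p = \<infinity>"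
    proof -
      have Eq: "{ereal b |b. a \<le> b \<and> zstar a \<beta> \<eta> \<nu> b = ereal (1 - p)} = {}"
      proof -
        have "zstar a \<beta> \<eta> \<nu> b \<noteq> ereal (1 - p)" if "a \<le> b" for b
          using zK[OF that] rK unfolding r_def by auto
        then show "{ereal b |b. a \<le> b \<and> zstar a \<beta> \<eta> \<nu> b = ereal (1 - p)} = {}" by blast
      qed
      show ?thesis unfolding qstar_def Eq by (simp add: top_ereal_def)
    qed
    have qv: "quantile_value a \<beta> \<eta> \<nu> p = \<infinity>"
      unfolding quantile_value_def
    proof (rule ereal_Sup_inf)
      fix M
      define M' where "M' = max M a + \<eta> / \<nu>"
      have en: "\<eta> / \<nu> > 0" using ep np by simp
      have aM: "a < M'" unfolding M'_def using en by simp
      define c where "c = min (\<eta> / 2) ((K - r) / (M' - a))"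
      have c: "0 < c" "c < \<eta>" unfolding c_def using ep rK aM by auto
      obtain f where feas: "feasible a \<beta> \<eta> \<nu> f"
        and W2: "\<And>b. a \<le> b \<Longrightarrow> integral {a..b} f \<le> G ((\<eta> - c) / \<nu>) + c * (b - a)"
        and W3: "\<And>M y. a \<le> M \<Longrightarrow> integral {a..M} f \<le> y \<Longrightarrow> y \<le> \<beta> \<Longrightarrow> \<exists>q\<ge>M. integral {a..q} f = y"
        using wprops[OF A c] unfolding G_def by metis
      have "G ((\<eta> - c) / \<nu>) \<le> \<eta>^2 / (2 * \<nu>)" unfolding G_def by (rule Gmax[OF A])
      moreover have "c * (M' - a) \<le> K - r"
      proof -
        have "c \<le> (K - r) / (M' - a)" unfolding c_def by simp
        then show ?thesis using aM by (simp add: le_divide_eq)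
      qed
      ultimately have "integral {a..M'} f \<le> \<beta> - r"
        using W2[of M'] aM unfolding K_def by linarith
      then obtain q where q: "q \<ge> M'" "integral {a..q} f = \<beta> - r"
        using W3[of M' "\<beta> - r"] aM r0 by auto
      have "ereal q \<in> {ereal q |q f. a \<le> q \<and> feasible a \<beta> \<eta> \<nu> f \<and> 1 - \<beta> + integral {a..q} f = p}"
        by (rule Qmem) (use q aM feas in auto)
      moreover have "M \<le> q" using q(1) en unfolding M'_def by simp
      ultimately show "\<exists>x\<in>{ereal q |q f. a \<le> q \<and> feasible a \<beta> \<eta> \<nu> f \<and> 1 - \<beta> + integral {a..q} f = p}. ereal M \<le> x"
        by force
    qed
    show ?thesis using qv qs False by simp
  qed
qed

end
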